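(* Let $k$ be a field, let $A$ be a finite-dimensional (associative, unital) $k$-algebra, and let $(\Omega A,d)$ be a differential graded algebra with $\Omega^0A=A$ such that $\Omega^1A$ is finite-dimensional over $k$. Put $C=\mathrm{Hom}_k(A,k)$ (the dual coalgebra), $L=\mathrm{Hom}_k(\Omega^1A,k)$ and $\lambda=\mathrm{Hom}_k(d,k):L\to C$, $l\mapsto l\circ d$. Let $M$ be a right $A$-module, regarded as a left $C$-comodule via ${}^M\!\varrho(m)=\sum_s c^s\otimes m a^s$. Let $\Upsilon: L\Box_C M\to \mathrm{Hom}_A(\Omega^1A,M)$, $\Upsilon(\sum_i l_i\otimes m_i)(\omega)=\sum_i l_i(\omega)m_i$ (this is a linear isomorphism). Then the assignment $\nabla_0\mapsto -\nabla_0\circ\Upsilon$ is a bijection from the set of hom-connections $\nabla_0:\mathrm{Hom}_A(\Omega^1A,M)\to M$ onto the set of connections $\bar\nabla: L\Box_C M\to M$ in the left $C$-comodule $M$ with respect to $\lambda$.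
   Context: All algebras are associative and unital over the field $k$; $\otimes$ is over $k$. A differential graded algebra $\Omega A=\bigoplus_{n\ge0}\Omega^nA$ over $A=\Omega^0A$ has a degree-one differential $d$ with $d^2=0$ satisfying the graded Leibniz rule. For a right $A$-module $M$, $\mathrm{Hom}_A(\Omega^1A,M)$ denotes right $A$-linear maps, and it is a right $A$-module via $(fa)(\omega)=f(a\omega)$. A (right) hom-connection on $M$ is a $k$-linear map $\nabla_0:\mathrm{Hom}_A(\Omega^1A,M)\to M$ with $\nabla_0(fa)=\nabla_0(f)a+f(da)$ for all $f$ and $a\in A$. Fix a basis $\{a^s\}$ of $A$ and the dual basis $\{c^s\}$ of $C$. $L$ is an $A$-bimodule by $(alb)(\omega)=l(b\omega a)$, and a $C$-bicomodule with left coaction $l\mapsto\sum_s c^s\otimes la^s$ and right coaction $l\mapsto \sum_s a^sl\otimes c^s$. The cotensor product is $L\Box_C M=\{\sum_i l_i\otimes m_i\in L\otimes M : \sum_{i,s}a^sl_i\otimes c^s\otimes m_i=\sum_{i,s}l_i\otimes c^s\otimes m_ia^s\}$. A connection in the left $C$-comodule $M$ with respect to $\lambda$ is a $k$-linear map $\bar\nabla:L\Box_CM\to M$ such that for all $\sum_i l_i\otimes m_i\in L\Box_C M$: ${}^M\!\varrho\big(\bar\nabla(\sum_i l_i\otimes m_i)\big)=\sum_s c^s\otimes\bar\nabla(\sum_i l_ia^s\otimes m_i)+\sum_i\lambda(l_i)\otimes m_i$ in $C\otimes M$. *)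

theory Defs
  imports Complex_Main "HOL-Library.Function_Algebras"
begin

definition k_algebra :: "('k::field \<Rightarrow> 'a::ring_1 \<Rightarrow> 'a) \<Rightarrow> bool" where
  "k_algebra sA \<longleftrightarrow> vector_space sA \<and>
     (\<forall>c x y. sA c (x * y) = sA c x * y \<and> sA c (x * y) = x * sA c y)"

text \<open>Degree 0 and 1 part of a DGA with Omega^0 A = A: an A-bimodule Omega^1 A (k-vector space,
  compatible actions) and a k-linear map d : A -> Omega^1 A satisfying the Leibniz rule.\<close>
definition dga01 ::
  "('k::field \<Rightarrow> 'a::ring_1 \<Rightarrow> 'a) \<Rightarrow> ('k \<Rightarrow> 'w::ab_group_add \<Rightarrow> 'w) \<Rightarrow>
   ('a \<Rightarrow> 'w \<Rightarrow> 'w) \<Rightarrow> ('w \<Rightarrow> 'a \<Rightarrow> 'w) \<Rightarrow> ('a \<Rightarrow> 'w) \<Rightarrow> bool" where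
  "dga01 sA sW lm rm d \<longleftrightarrow> vector_space sW \<and>
     (\<forall>a b w. lm (a + b) w = lm a w + lm b w) \<and>
     (\<forall>a w w'. lm a (w + w') = lm a w + lm a w') \<and>
     (\<forall>a b w. lm (a * b) w = lm a (lm b w)) \<and>
     (\<forall>w. lm 1 w = w) \<and>
     (\<forall>a b w. rm w (a + b) = rm w a + rm w b) \<and>
     (\<forall>a w w'. rm (w + w') a = rm w a + rm w' a) \<and>
     (\<forall>a b w. rm w (a * b) = rm (rm w a) b) \<and>
     (\<forall>w. rm w 1 = w) \<and>
     (\<forall>a b w. lm a (rm w b) = rm (lm a w) b) \<and>
     (\<forall>c a w. lm (sA c a) w = sW c (lm a w) \<and> lm a (sW c w) = sW c (lm a w)) \<and>
     (\<forall>c a w. rm w (sA c a) = sW c (rm w a) \<and> rm (sW c w) a = sW c (rm w a)) \<and>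
     (\<forall>a b. d (a + b) = d a + d b) \<and>
     (\<forall>c a. d (sA c a) = sW c (d a)) \<and>
     (\<forall>a b. d (a * b) = rm (d a) b + lm a (d b))"

definition right_module ::
  "('k::field \<Rightarrow> 'a::ring_1 \<Rightarrow> 'a) \<Rightarrow> ('k \<Rightarrow> 'm::ab_group_add \<Rightarrow> 'm) \<Rightarrow> ('m \<Rightarrow> 'a \<Rightarrow> 'm) \<Rightarrow> bool" where
  "right_module sA sM act \<longleftrightarrow> vector_space sM \<and>
     (\<forall>m m' a. act (m + m') a = act m a + act m' a) \<and>
     (\<forall>m a b. act m (a + b) = act m a + act m b) \<and>
     (\<forall>m a b. act m (a * b) = act (act m a) b) \<and>
     (\<forall>m. act m 1 = m) \<and>
     (\<forall>c m a. act (sM c m) a = sM c (act m a) \<and> act m (sA c a) = sM c (act m a))"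

text \<open>A (finite) basis of A, given as a list, and its dual basis of C = Hom_k(A,k).\<close>
definition basis_list :: "('k::field \<Rightarrow> 'a::ab_group_add \<Rightarrow> 'a) \<Rightarrow> 'a list \<Rightarrow> bool" where
  "basis_list sA as \<longleftrightarrow> distinct as \<and> \<not> module.dependent sA (set as) \<and>
     module.span sA (set as) = UNIV"

definition k_lin_fun :: "('k::field \<Rightarrow> 'v::ab_group_add \<Rightarrow> 'v) \<Rightarrow> ('v \<Rightarrow> 'k) \<Rightarrow> bool" where
  "k_lin_fun sV l \<longleftrightarrow> (\<forall>x y. l (x + y) = l x + l y) \<and> (\<forall>c x. l (sV c x) = c * l x)"

definition dual_basis :: "('k::field \<Rightarrow> 'a::ab_group_add \<Rightarrow> 'a) \<Rightarrow> 'a list \<Rightarrow> ('a \<Rightarrow> 'k) list \<Rightarrow> bool" where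
  "dual_basis sA as cs \<longleftrightarrow> length cs = length as \<and> (\<forall>c\<in>set cs. k_lin_fun sA c) \<and>
     (\<forall>i<length as. \<forall>j<length as. (cs ! i) (as ! j) = (if i = j then 1 else 0))"

definition fscale :: "'k::field \<Rightarrow> ('v \<Rightarrow> 'k) \<Rightarrow> ('v \<Rightarrow> 'k)" where
  "fscale c l = (\<lambda>x. c * l x)"

definition pt :: "'p \<Rightarrow> 'p \<Rightarrow> 'k::field" where
  "pt p = (\<lambda>q. if q = p then 1 else 0)"

definition lin_combs :: "('x \<Rightarrow> 'k::field) set \<Rightarrow> ('x \<Rightarrow> 'k) set" where
  "lin_combs R = {f. \<exists>gs :: ('k \<times> ('x \<Rightarrow> 'k)) list. set (map snd gs) \<subseteq> R \<and>
                       f = (\<lambda>x. sum_list (map (\<lambda>(c, g). c * g x) gs))}"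

text \<open>A formal expression sum_i c_i (v_i (x) w_i), as an element of the free vector space on V x W.\<close>
definition formal2 :: "('k::field \<times> 'v \<times> 'w) list \<Rightarrow> ('v \<times> 'w \<Rightarrow> 'k)" where
  "formal2 xs = (\<lambda>p. sum_list (map (\<lambda>(c, v, w). c * pt (v, w) p) xs))"

definition bil_rels :: "('k::field \<Rightarrow> 'v::ab_group_add \<Rightarrow> 'v) \<Rightarrow> ('k \<Rightarrow> 'w::ab_group_add \<Rightarrow> 'w)
    \<Rightarrow> ('v \<times> 'w \<Rightarrow> 'k) set" where
  "bil_rels sV sW =
     {(\<lambda>q. pt (v + v', w) q - pt (v, w) q - pt (v', w) q) | v v' w. True} \<union>
     {(\<lambda>q. pt (v, w + w') q - pt (v, w) q - pt (v, w') q) | v w w'. True} \<union>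
     {(\<lambda>q. pt (sV c v, w) q - c * pt (v, w) q) | c v w. True} \<union>
     {(\<lambda>q. pt (v, sW c w) q - c * pt (v, w) q) | c v w. True}"

definition tensor2_zero :: "('k::field \<Rightarrow> 'v::ab_group_add \<Rightarrow> 'v) \<Rightarrow> ('k \<Rightarrow> 'w::ab_group_add \<Rightarrow> 'w)
    \<Rightarrow> ('k \<times> 'v \<times> 'w) list \<Rightarrow> bool" where
  "tensor2_zero sV sW xs \<longleftrightarrow> formal2 xs \<in> lin_combs (bil_rels sV sW)"

definition formal3 :: "('k::field \<times> 'u \<times> 'v \<times> 'w) list \<Rightarrow> ('u \<times> 'v \<times> 'w \<Rightarrow> 'k)" where
  "formal3 xs = (\<lambda>p. sum_list (map (\<lambda>(c, u, v, w). c * pt (u, v, w) p) xs))"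

definition tril_rels :: "('k::field \<Rightarrow> 'u::ab_group_add \<Rightarrow> 'u) \<Rightarrow> ('k \<Rightarrow> 'v::ab_group_add \<Rightarrow> 'v)
    \<Rightarrow> ('k \<Rightarrow> 'w::ab_group_add \<Rightarrow> 'w) \<Rightarrow> ('u \<times> 'v \<times> 'w \<Rightarrow> 'k) set" where
  "tril_rels sU sV sW =
     {(\<lambda>q. pt (u + u', v, w) q - pt (u, v, w) q - pt (u', v, w) q) | u u' v w. True} \<union>
     {(\<lambda>q. pt (u, v + v', w) q - pt (u, v, w) q - pt (u, v', w) q) | u v v' w. True} \<union>
     {(\<lambda>q. pt (u, v, w + w') q - pt (u, v, w) q - pt (u, v, w') q) | u v w w'. True} \<union>
     {(\<lambda>q. pt (sU c u, v, w) q - c * pt (u, v, w) q) | c u v w. True} \<union>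
     {(\<lambda>q. pt (u, sV c v, w) q - c * pt (u, v, w) q) | c u v w. True} \<union>
     {(\<lambda>q. pt (u, v, sW c w) q - c * pt (u, v, w) q) | c u v w. True}"

definition tensor3_zero :: "('k::field \<Rightarrow> 'u::ab_group_add \<Rightarrow> 'u) \<Rightarrow> ('k \<Rightarrow> 'v::ab_group_add \<Rightarrow> 'v)
    \<Rightarrow> ('k \<Rightarrow> 'w::ab_group_add \<Rightarrow> 'w) \<Rightarrow> ('k \<times> 'u \<times> 'v \<times> 'w) list \<Rightarrow> bool" where
  "tensor3_zero sU sV sW xs \<longleftrightarrow> formal3 xs \<in> lin_combs (tril_rels sU sV sW)"

text \<open>Elements of L \<otimes> M are represented by lists [(l_i, m_i)] (meaning sum_i l_i \<otimes> m_i), with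
  L = Hom_k(Omega^1 A, k).  The list lies in L \<box>_C M iff all l_i are k-linear and
  sum_{i,s} a^s l_i \<otimes> c^s \<otimes> m_i - sum_{i,s} l_i \<otimes> c^s \<otimes> m_i a^s = 0 in L \<otimes> C \<otimes> M,
  where (a l)(w) = l(w a) and (l a)(w) = l(a w).\<close>
definition cotensor ::
  "('k::field \<Rightarrow> 'w::ab_group_add \<Rightarrow> 'w) \<Rightarrow> ('w \<Rightarrow> 'a \<Rightarrow> 'w) \<Rightarrow> ('k \<Rightarrow> 'm::ab_group_add \<Rightarrow> 'm)
    \<Rightarrow> ('m \<Rightarrow> 'a \<Rightarrow> 'm) \<Rightarrow> 'a list \<Rightarrow> ('a \<Rightarrow> 'k) list \<Rightarrow> (('w \<Rightarrow> 'k) \<times> 'm) list set" where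
  "cotensor sW rm sM act as cs =
     {xs. (\<forall>(l, m)\<in>set xs. k_lin_fun sW l) \<and>
          tensor3_zero fscale fscale sM
            ([(1, (\<lambda>w. l (rm w a)), c, m). (l, m) \<leftarrow> xs, (a, c) \<leftarrow> zip as cs] @
             [(-1, l, c, act m a). (l, m) \<leftarrow> xs, (a, c) \<leftarrow> zip as cs])}"

definition homA :: "('w \<Rightarrow> 'a \<Rightarrow> 'w::ab_group_add) \<Rightarrow> ('m::ab_group_add \<Rightarrow> 'a \<Rightarrow> 'm) \<Rightarrow> ('w \<Rightarrow> 'm) set" where
  "homA rm act = {f. (\<forall>x y. f (x + y) = f x + f y) \<and> (\<forall>x a. f (rm x a) = act (f x) a)}"

text \<open>Hom-connections; values outside Hom_A(Omega^1 A, M) are normalised to 0.\<close>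
definition hom_connections ::
  "('a::ring_1 \<Rightarrow> 'w::ab_group_add \<Rightarrow> 'w) \<Rightarrow> ('w \<Rightarrow> 'a \<Rightarrow> 'w) \<Rightarrow> ('a \<Rightarrow> 'w)
    \<Rightarrow> ('k::field \<Rightarrow> 'm::ab_group_add \<Rightarrow> 'm) \<Rightarrow> ('m \<Rightarrow> 'a \<Rightarrow> 'm) \<Rightarrow> (('w \<Rightarrow> 'm) \<Rightarrow> 'm) set" where
  "hom_connections lm rm d sM act =
     {N0. (\<forall>f\<in>homA rm act. \<forall>g\<in>homA rm act. N0 (\<lambda>w. f w + g w) = N0 f + N0 g) \<and>
          (\<forall>c. \<forall>f\<in>homA rm act. N0 (\<lambda>w. sM c (f w)) = sM c (N0 f)) \<and>
          (\<forall>f\<in>homA rm act. \<forall>a. N0 (\<lambda>w. f (lm a w)) = act (N0 f) a + f (d a)) \<and>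
          (\<forall>f. f \<notin> homA rm act \<longrightarrow> N0 f = 0)}"

text \<open>Connections in the left C-comodule M w.r.t. lambda = (l \<mapsto> l \<circ> d): k-linear maps on
  L \<box>_C M (well defined on tensors), values outside the representatives normalised to 0.\<close>
definition comodule_connections ::
  "('a::ring_1 \<Rightarrow> 'w::ab_group_add \<Rightarrow> 'w) \<Rightarrow> ('w \<Rightarrow> 'a \<Rightarrow> 'w) \<Rightarrow> ('a \<Rightarrow> 'w)
    \<Rightarrow> ('k::field \<Rightarrow> 'w \<Rightarrow> 'w) \<Rightarrow> ('k \<Rightarrow> 'm::ab_group_add \<Rightarrow> 'm) \<Rightarrow> ('m \<Rightarrow> 'a \<Rightarrow> 'm)
    \<Rightarrow> 'a list \<Rightarrow> ('a \<Rightarrow> 'k) list \<Rightarrow> ((('w \<Rightarrow> 'k) \<times> 'm) list \<Rightarrow> 'm) set" where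
  "comodule_connections lm rm d sW sM act as cs =
     {N. (\<forall>xs\<in>cotensor sW rm sM act as cs. \<forall>ys\<in>cotensor sW rm sM act as cs.
            tensor2_zero fscale sM ([(1, l, m). (l, m) \<leftarrow> xs] @ [(-1, l, m). (l, m) \<leftarrow> ys])
            \<longrightarrow> N xs = N ys) \<and>
         (\<forall>xs\<in>cotensor sW rm sM act as cs. \<forall>ys\<in>cotensor sW rm sM act as cs.
            N (xs @ ys) = N xs + N ys) \<and>
         (\<forall>c. \<forall>xs\<in>cotensor sW rm sM act as cs. N (map (\<lambda>(l, m). (l, sM c m)) xs) = sM c (N xs)) \<and>
         (\<forall>xs\<in>cotensor sW rm sM act as cs.
            tensor2_zero fscale sM
              ([(1, c, act (N xs) a). (a, c) \<leftarrow> zip as cs] @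
               [(-1, c, N (map (\<lambda>(l, m). (\<lambda>w. l (lm a w), m)) xs)). (a, c) \<leftarrow> zip as cs] @
               [(-1, (\<lambda>x. l (d x)), m). (l, m) \<leftarrow> xs])) \<and>
         (\<forall>xs. xs \<notin> cotensor sW rm sM act as cs \<longrightarrow> N xs = 0)}"

definition Upsilon :: "('k::field \<Rightarrow> 'm::ab_group_add \<Rightarrow> 'm) \<Rightarrow> (('w \<Rightarrow> 'k) \<times> 'm) list \<Rightarrow> 'w \<Rightarrow> 'm" where
  "Upsilon sM xs = (\<lambda>w. sum_list (map (\<lambda>(l, m). sM (l w) m) xs))"

definition hom_to_conn ::
  "('k::field \<Rightarrow> 'w::ab_group_add \<Rightarrow> 'w) \<Rightarrow> ('w \<Rightarrow> 'a \<Rightarrow> 'w) \<Rightarrow> ('k \<Rightarrow> 'm::ab_group_add \<Rightarrow> 'm)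
    \<Rightarrow> ('m \<Rightarrow> 'a \<Rightarrow> 'm) \<Rightarrow> 'a list \<Rightarrow> ('a \<Rightarrow> 'k) list \<Rightarrow> (('w \<Rightarrow> 'm) \<Rightarrow> 'm)
    \<Rightarrow> ((('w \<Rightarrow> 'k) \<times> 'm) list \<Rightarrow> 'm)" where
  "hom_to_conn sW rm sM act as cs N0 =
     (\<lambda>xs. if xs \<in> cotensor sW rm sM act as cs then - N0 (Upsilon sM xs) else 0)"

end

theory Submission
  imports Defs
begin

definition meq :: "('p \<Rightarrow> 'k::field) set \<Rightarrow> ('p \<Rightarrow> 'k) \<Rightarrow> ('p \<Rightarrow> 'k) \<Rightarrow> bool" where
  "meq Z f g \<longleftrightarrow> (\<lambda>q. f q - g q) \<in> Z"

lemma lc_zero: "(\<lambda>q. 0) \<in> lin_combs R"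
  unfolding lin_combs_def by (rule CollectI, rule exI[of _ "[]"]) simp

lemma lc_add: assumes "f \<in> lin_combs R" "g \<in> lin_combs R" shows "(\<lambda>q. f q + g q) \<in> lin_combs R"
proof -
  obtain gs where gs: "set (map snd gs) \<subseteq> R" "f = (\<lambda>x. sum_list (map (\<lambda>(c, g). c * g x) gs))"
    using assms(1) unfolding lin_combs_def by blast
  obtain hs where hs: "set (map snd hs) \<subseteq> R" "g = (\<lambda>x. sum_list (map (\<lambda>(c, g). c * g x) hs))"
    using assms(2) unfolding lin_combs_def by blast
  show ?thesis unfolding lin_combs_def
    by (rule CollectI, rule exI[of _ "gs @ hs"]) (use gs hs in auto)
qed

lemma lc_scale: assumes "f \<in> lin_combs R" shows "(\<lambda>q. c * f q) \<in> lin_combs R"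
proof -
  obtain gs where gs: "set (map snd gs) \<subseteq> R" "f = (\<lambda>x. sum_list (map (\<lambda>(c, g). c * g x) gs))"
    using assms(1) unfolding lin_combs_def by blast
  have "(\<lambda>x. c * sum_list (map (\<lambda>(c, g). c * g x) gs)) = (\<lambda>x. sum_list (map (\<lambda>(c, g). c * g x) (map (\<lambda>(d,g). (c*d, g)) gs)))"
    by (rule ext, induction gs) (auto simp: algebra_simps)
  then show ?thesis unfolding lin_combs_def using gs
    by (intro CollectI exI[of _ "map (\<lambda>(d,g). (c*d, g)) gs"]) (auto simp: case_prod_beta)
qed

lemma lc_gen: assumes "r \<in> R" shows "r \<in> lin_combs R"
  unfolding lin_combs_def using assms by (intro CollectI exI[of _ "[(1, r)]"]) auto

lemma lc_ext: "f \<in> lin_combs R \<Longrightarrow> (\<And>q. f q = g q) \<Longrightarrow> g \<in> lin_combs R"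
proof -
  assume "f \<in> lin_combs R" "\<And>q. f q = g q"
  then have "f = g" by auto
  then show ?thesis using \<open>f \<in> lin_combs R\<close> by simp
qed

abbreviation "LC \<equiv> lin_combs"

lemma meq_refl: "meq (LC R) f f" unfolding meq_def using lc_zero by simp
lemma meq_ext: "(\<And>q. f q = g q) \<Longrightarrow> meq (LC R) f g"
  by (metis ext meq_refl)
lemma meq_sym: "meq (LC R) f g \<Longrightarrow> meq (LC R) g f"
  unfolding meq_def by (drule lc_scale[where c="-1"]) (erule lc_ext, simp)
lemma meq_trans: "meq (LC R) f g \<Longrightarrow> meq (LC R) g h \<Longrightarrow> meq (LC R) f h"
  unfolding meq_def by (drule (1) lc_add) (erule lc_ext, simp)
declare meq_trans[trans]
lemma meq_add: "meq (LC R) f g \<Longrightarrow> meq (LC R) f' g' \<Longrightarrow> meq (LC R) (\<lambda>q. f q + f' q) (\<lambda>q. g q + g' q)"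
  unfolding meq_def by (drule (1) lc_add) (erule lc_ext, simp)
lemma meq_scale: "meq (LC R) f g \<Longrightarrow> meq (LC R) (\<lambda>q. c * f q) (\<lambda>q. c * g q)"
  unfolding meq_def by (drule lc_scale[where c=c]) (erule lc_ext, simp add: algebra_simps)
lemma meq_sum_list: "(\<And>x. x \<in> set xs \<Longrightarrow> meq (LC R) (F x) (G x)) \<Longrightarrow>
   meq (LC R) (\<lambda>q. \<Sum>x\<leftarrow>xs. F x q) (\<lambda>q. \<Sum>x\<leftarrow>xs. G x q)"
proof (induction xs)
  case Nil then show ?case by (simp add: meq_refl)
next
  case (Cons a xs) then show ?case by (simp add: meq_add)
qed
lemma meq_sum: "(\<And>x. x \<in> A \<Longrightarrow> meq (LC R) (F x) (G x)) \<Longrightarrow>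
   meq (LC R) (\<lambda>q. \<Sum>x\<in>A. F x q) (\<lambda>q. \<Sum>x\<in>A. G x q)"
proof (induction A rule: infinite_finite_induct)
  case (infinite A) then show ?case by (simp add: meq_refl)
next
  case empty then show ?case by (simp add: meq_refl)
next
  case (insert x F) then show ?case by (simp add: meq_add)
qed
lemma meq_zero_iff: "meq (LC R) f (\<lambda>q. 0) \<longleftrightarrow> f \<in> LC R"
  unfolding meq_def by simp

definition slot :: "('p \<Rightarrow> 'k::field) set \<Rightarrow> ('k \<Rightarrow> 'u::ab_group_add \<Rightarrow> 'u) \<Rightarrow> ('u \<Rightarrow> 'r \<Rightarrow> 'p) \<Rightarrow> bool" where
  "slot Z sU \<pi> \<longleftrightarrow> (\<forall>u u' r. meq Z (\<lambda>q. pt (\<pi> (u+u') r) q) (\<lambda>q. pt (\<pi> u r) q + pt (\<pi> u' r) q)) \<and>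
     (\<forall>c u r. meq Z (\<lambda>q. pt (\<pi> (sU c u) r) q) (\<lambda>q. c * pt (\<pi> u r) q))"

lemma slot_zero: assumes "slot (LC R) sU \<pi>" shows "meq (LC R) (\<lambda>q. pt (\<pi> 0 r) q) (\<lambda>q. 0)"
proof -
  have "meq (LC R) (\<lambda>q. pt (\<pi> (0+0) r) q) (\<lambda>q. pt (\<pi> 0 r) q + pt (\<pi> 0 r) q)"
    using assms unfolding slot_def by blast
  then show ?thesis unfolding meq_def by (drule_tac c="-1" in lc_scale) (erule lc_ext, simp)
qed

lemma slot_sum_list: assumes "slot (LC R) sU \<pi>"
  shows "meq (LC R) (\<lambda>q. pt (\<pi> (\<Sum>x\<leftarrow>xs. F x) r) q) (\<lambda>q. \<Sum>x\<leftarrow>xs. pt (\<pi> (F x) r) q)"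
proof (induction xs)
  case Nil then show ?case using slot_zero[OF assms] by simp
next
  case (Cons a xs)
  have "meq (LC R) (\<lambda>q. pt (\<pi> (F a + (\<Sum>x\<leftarrow>xs. F x)) r) q)
     (\<lambda>q. pt (\<pi> (F a) r) q + pt (\<pi> (\<Sum>x\<leftarrow>xs. F x) r) q)"
    using assms unfolding slot_def by blast
  moreover have "meq (LC R) (\<lambda>q. pt (\<pi> (F a) r) q + pt (\<pi> (\<Sum>x\<leftarrow>xs. F x) r) q)
     (\<lambda>q. pt (\<pi> (F a) r) q + (\<Sum>x\<leftarrow>xs. pt (\<pi> (F x) r) q))"
    using Cons meq_add meq_refl by blast
  ultimately show ?case by (simp add: meq_trans)
qed

lemma slot_scale: assumes "slot (LC R) sU \<pi>"
  shows "meq (LC R) (\<lambda>q. c * pt (\<pi> u r) q) (\<lambda>q. pt (\<pi> (sU c u) r) q)"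
  using assms unfolding slot_def by (blast intro: meq_sym)

lemma slot_add: assumes "slot (LC R) sU \<pi>"
  shows "meq (LC R) (\<lambda>q. pt (\<pi> (u+u') r) q) (\<lambda>q. pt (\<pi> u r) q + pt (\<pi> u' r) q)"
  using assms unfolding slot_def by blast

lemma slot_bil1: "slot (LC (bil_rels sV sW)) sV (\<lambda>v w. (v, w))"
  unfolding slot_def meq_def
  by (intro conjI allI; rule lc_gen; unfold bil_rels_def; fastforce simp: algebra_simps)

lemma slot_bil2: "slot (LC (bil_rels sV sW)) sW (\<lambda>w v. (v, w))"
  unfolding slot_def meq_def
  by (intro conjI allI; rule lc_gen; unfold bil_rels_def; fastforce simp: algebra_simps)

lemma slot_tril1: "slot (LC (tril_rels sU sV sW)) sU (\<lambda>u (v, w). (u, v, w))"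
  unfolding slot_def meq_def
  by (intro conjI allI; rule lc_gen; unfold tril_rels_def; fastforce simp: algebra_simps split: prod.splits)

lemma slot_tril3: "slot (LC (tril_rels sU sV sW)) sW (\<lambda>w (u, v). (u, v, w))"
  unfolding slot_def meq_def
  by (intro conjI allI; rule lc_gen; unfold tril_rels_def; fastforce simp: algebra_simps split: prod.splits)


definition EV :: "('k::field \<Rightarrow> 'm::ab_group_add \<Rightarrow> 'm) \<Rightarrow> ('p \<Rightarrow> 'm) \<Rightarrow> ('p \<Rightarrow> 'k) \<Rightarrow> 'm" where
  "EV sM F f = (\<Sum>p | f p \<noteq> 0. sM (f p) (F p))"

definition fsupp :: "('p \<Rightarrow> 'k::field) \<Rightarrow> bool" where "fsupp f \<longleftrightarrow> finite {p. f p \<noteq> 0}"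

context
  fixes sM :: "'k::field \<Rightarrow> 'm::ab_group_add \<Rightarrow> 'm" and F :: "'p \<Rightarrow> 'm"
  assumes vs: "vector_space sM"
begin

interpretation M: vector_space sM by (rule vs)

lemma EV_superset: "fsupp (f::'p\<Rightarrow>'k) \<Longrightarrow> finite S \<Longrightarrow> {p. f p \<noteq> 0} \<subseteq> S \<Longrightarrow> EV sM F f = (\<Sum>p\<in>S. sM (f p) (F p))"
  unfolding EV_def fsupp_def by (rule sum.mono_neutral_left) auto

lemma fsupp_add: "fsupp f \<Longrightarrow> fsupp g \<Longrightarrow> fsupp (\<lambda>q. f q + g q)"
  unfolding fsupp_def by (rule finite_subset[of _ "{p. f p \<noteq> 0} \<union> {p. g p \<noteq> 0}"]) auto
lemma fsupp_scale: "fsupp f \<Longrightarrow> fsupp (\<lambda>q. c * f q)"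
  unfolding fsupp_def by (rule finite_subset[of _ "{p. f p \<noteq> 0}"]) auto
lemma fsupp_pt: "fsupp (pt p)"
  unfolding fsupp_def by (rule finite_subset[of _ "{p}"]) (auto simp: pt_def)

lemma EV_add: assumes "fsupp f" "fsupp g" shows "EV sM F (\<lambda>q. f q + g q) = EV sM F f + EV sM F g"
proof -
  let ?S = "{p. f p \<noteq> 0} \<union> {p. g p \<noteq> 0}"
  have "EV sM F (\<lambda>q. f q + g q) = (\<Sum>p\<in>?S. sM (f p + g p) (F p))"
    by (rule EV_superset) (use assms fsupp_add in \<open>auto simp: fsupp_def\<close>)
  also have "\<dots> = (\<Sum>p\<in>?S. sM (f p) (F p)) + (\<Sum>p\<in>?S. sM (g p) (F p))"
    by (simp add: M.scale_left_distrib sum.distrib)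
  also have "\<dots> = EV sM F f + EV sM F g"
    using assms by (simp add: EV_superset[symmetric] fsupp_def)
  finally show ?thesis .
qed

lemma EV_scale: assumes "fsupp f" shows "EV sM F (\<lambda>q. c * f q) = sM c (EV sM F f)"
proof -
  let ?S = "{p. f p \<noteq> 0}"
  have "EV sM F (\<lambda>q. c * f q) = (\<Sum>p\<in>?S. sM (c * f p) (F p))"
    by (rule EV_superset) (use assms fsupp_scale in \<open>auto simp: fsupp_def\<close>)
  also have "\<dots> = sM c (EV sM F f)"
    by (simp add: EV_def M.scale_sum_right)
  finally show ?thesis .
qed

lemma EV_pt: "EV sM F (pt p) = F p"
proof -
  have "EV sM F (pt p) = (\<Sum>q\<in>{p}. sM (pt p q) (F q))"
    by (rule EV_superset[OF fsupp_pt]) (auto simp: pt_def)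
  then show ?thesis by (simp add: pt_def)
qed

lemma EV_rel3: "fsupp (\<lambda>q. pt p1 q - pt p2 q - pt p3 q) \<and>
   EV sM F (\<lambda>q. pt p1 q - pt p2 q - pt p3 q) = F p1 - F p2 - F p3"
proof -
  have e: "(\<lambda>q. pt p1 q - pt p2 q - pt p3 q) = (\<lambda>q. (\<lambda>q. pt p1 q + (-1) * pt p2 q) q + (-1) * pt p3 q)"
    by auto
  have "fsupp (\<lambda>q. pt p1 q + (-1) * pt p2 q)" by (intro fsupp_add fsupp_scale fsupp_pt)
  then have "fsupp (\<lambda>q. (\<lambda>q. pt p1 q + (-1) * pt p2 q) q + (-1) * pt p3 q) \<and>
     EV sM F (\<lambda>q. (\<lambda>q. pt p1 q + (-1) * pt p2 q) q + (-1) * pt p3 q) = F p1 - F p2 - F p3"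
    by (simp only: EV_add EV_scale fsupp_add fsupp_scale fsupp_pt EV_pt) simp
  then show ?thesis by (simp only: e)
qed

lemma EV_rel2: "fsupp (\<lambda>q. pt p1 q - c * pt p2 q) \<and>
   EV sM F (\<lambda>q. pt p1 q - c * pt p2 q) = F p1 - sM c (F p2)"
proof -
  have e: "(\<lambda>q. pt p1 q - c * pt p2 q) = (\<lambda>q. pt p1 q + (- c) * pt p2 q)"
    by auto
  have "fsupp (\<lambda>q. pt p1 q + (- c) * pt p2 q) \<and>
     EV sM F (\<lambda>q. pt p1 q + (- c) * pt p2 q) = F p1 - sM c (F p2)"
    by (simp only: EV_add EV_scale fsupp_add fsupp_scale fsupp_pt EV_pt) simp
  then show ?thesis by (simp only: e)
qed

lemma EV_lc: assumes R: "\<And>r. r \<in> R \<Longrightarrow> fsupp r \<and> EV sM F r = 0" and f: "f \<in> LC R"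
  shows "fsupp f \<and> EV sM F f = 0"
proof -
  obtain gs where gs: "set (map snd gs) \<subseteq> R" "f = (\<lambda>x. sum_list (map (\<lambda>(c, g). c * g x) gs))"
    using f unfolding lin_combs_def by blast
  have "set (map snd gs) \<subseteq> R \<Longrightarrow> fsupp (\<lambda>x. sum_list (map (\<lambda>(c, g). c * g x) gs)) \<and>
      EV sM F (\<lambda>x. sum_list (map (\<lambda>(c, g). c * g x) gs)) = 0"
  proof (induction gs)
    case Nil then show ?case by (simp add: EV_def fsupp_def)
  next
    case (Cons a gs)
    obtain c g where a: "a = (c, g)" by fastforce
    have g: "fsupp g" "EV sM F g = 0" using R Cons.prems a by auto
    have "(\<lambda>x. sum_list (map (\<lambda>(c, g). c * g x) (a # gs))) =
        (\<lambda>x. (\<lambda>x. c * g x) x + (\<lambda>x. sum_list (map (\<lambda>(c, g). c * g x) gs)) x)"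
      by (simp add: a)
    have IH: "fsupp (\<lambda>x. sum_list (map (\<lambda>(c, g). c * g x) gs))"
         "EV sM F (\<lambda>x. sum_list (map (\<lambda>(c, g). c * g x) gs)) = 0" using Cons by (auto simp: a)
    have h1: "fsupp (\<lambda>x. c * g x)" by (rule fsupp_scale[OF g(1)])
    show ?case unfolding \<open>(\<lambda>x. sum_list (map (\<lambda>(c, g). c * g x) (a # gs))) = _\<close>
      using fsupp_add[OF h1 IH(1)] EV_add[OF h1 IH(1)] EV_scale[OF g(1)] IH(2) g(2) by simp
  qed
  then show ?thesis using gs by simp
qed

lemma EV_formal: "fsupp (\<lambda>q. \<Sum>(c, p)\<leftarrow>xs. c * pt p q) \<and>
   EV sM F (\<lambda>q. \<Sum>(c, p)\<leftarrow>xs. c * pt p q) = (\<Sum>(c, p)\<leftarrow>xs. sM c (F p))"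
proof (induction xs)
  case Nil then show ?case by (simp add: EV_def fsupp_def)
next
  case (Cons a xs)
  obtain c p where a: "a = (c, p)" by fastforce
  have "(\<lambda>q. \<Sum>(c, p)\<leftarrow>a#xs. c * pt p q) = (\<lambda>q. (\<lambda>q. c * pt p q) q + (\<lambda>q. \<Sum>(c, p)\<leftarrow>xs. c * pt p q) q)"
    by (simp add: a)
  then show ?case using Cons
    by (simp only: EV_add EV_scale fsupp_add fsupp_scale fsupp_pt EV_pt) (simp add: a)
qed

end

lemma eval2:
  assumes vs: "vector_space sM" and z: "tensor2_zero fscale sM xs"
  shows "(\<Sum>(c, g, m)\<leftarrow>xs. sM c (sM (g x0) m)) = 0"
proof -
  interpret M: vector_space sM by (rule vs)
  define F where "F = (\<lambda>(g, m). sM (g x0) m)"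
  have R: "fsupp r \<and> EV sM F r = 0" if "r \<in> bil_rels fscale sM" for r
    using that unfolding bil_rels_def
    apply (elim UnE CollectE exE conjE)
    apply (simp_all only: EV_rel3[OF vs] EV_rel2[OF vs])
    apply (auto simp: F_def fscale_def M.scale_left_distrib M.scale_right_distrib algebra_simps)
    done
  have f: "formal2 xs = (\<lambda>q. \<Sum>(c, p)\<leftarrow>map (\<lambda>(c,g,m). (c, (g, m))) xs. c * pt p q)"
    unfolding formal2_def by (rule ext, induction xs) auto
  have "EV sM F (formal2 xs) = 0"
    using EV_lc[OF vs R] z unfolding tensor2_zero_def by blast
  moreover have "EV sM F (formal2 xs) = (\<Sum>(c, p)\<leftarrow>map (\<lambda>(c,g,m). (c, (g, m))) xs. sM c (F p))"
    unfolding f using EV_formal[OF vs] by blast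
  moreover have "(\<Sum>(c, p)\<leftarrow>map (\<lambda>(c,g,m). (c, (g, m))) xs. sM c (F p)) = (\<Sum>(c, g, m)\<leftarrow>xs. sM c (sM (g x0) m))"
    by (induction xs) (auto simp: F_def)
  ultimately show ?thesis by simp
qed

lemma eval3:
  assumes vs: "vector_space sM" and z: "tensor3_zero fscale fscale sM xs"
  shows "(\<Sum>(c, l, g, m)\<leftarrow>xs. sM c (sM (l w * g a) m)) = 0"
proof -
  interpret M: vector_space sM by (rule vs)
  define F where "F = (\<lambda>(l, g, m). sM (l w * g a) m)"
  have R: "fsupp r \<and> EV sM F r = 0" if "r \<in> tril_rels fscale fscale sM" for r
    using that unfolding tril_rels_def
    apply (elim UnE CollectE exE conjE)
    apply (simp_all only: EV_rel3[OF vs] EV_rel2[OF vs])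
    apply (auto simp: F_def fscale_def M.scale_left_distrib M.scale_right_distrib algebra_simps)
    done
  have f: "formal3 xs = (\<lambda>q. \<Sum>(c, p)\<leftarrow>map (\<lambda>(c,l,g,m). (c, (l, g, m))) xs. c * pt p q)"
    unfolding formal3_def by (rule ext, induction xs) auto
  have "EV sM F (formal3 xs) = 0"
    using EV_lc[OF vs R] z unfolding tensor3_zero_def by blast
  moreover have "EV sM F (formal3 xs) = (\<Sum>(c, p)\<leftarrow>map (\<lambda>(c,l,g,m). (c, (l, g, m))) xs. sM c (F p))"
    unfolding f using EV_formal[OF vs] by blast
  moreover have "(\<Sum>(c, p)\<leftarrow>map (\<lambda>(c,l,g,m). (c, (l, g, m))) xs. sM c (F p)) = (\<Sum>(c, l, g, m)\<leftarrow>xs. sM c (sM (l w * g a) m))"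
    by (induction xs) (auto simp: F_def)
  ultimately show ?thesis by simp
qed


lemma sum_list_fun_apply: "(\<Sum>x\<leftarrow>xs. (F x :: 'a \<Rightarrow> 'b::comm_monoid_add)) y = (\<Sum>x\<leftarrow>xs. F x y)"
  by (induction xs) auto

lemma sum_fun_apply': "(\<Sum>x\<in>A. (F x :: 'a \<Rightarrow> 'b::comm_monoid_add)) y = (\<Sum>x\<in>A. F x y)"
  by (induction A rule: infinite_finite_induct) auto

lemma sum_list_sum_swap: "(\<Sum>x\<leftarrow>xs. \<Sum>j\<in>A. f x j) = (\<Sum>j\<in>A. \<Sum>x\<leftarrow>xs. (f x j :: 'b::comm_monoid_add))"
  by (induction xs) (auto simp: sum.distrib)

lemma GE:
  fixes Z :: "('p \<Rightarrow> 'k::field) set"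
  assumes s1: "slot (LC R) fscale \<pi>1" and s2: "slot (LC R) sM \<pi>2"
    and comp: "\<And>g m. \<pi>1 g (Ra m) = \<pi>2 m (Rb g)"
    and exp: "\<And>x. g x = (\<Sum>j<n. g (ps!j) * (es!j) x)"
    and vs: "vector_space sM"
  shows "meq (LC R) (\<lambda>q. pt (\<pi>1 g (Ra m)) q) (\<lambda>q. \<Sum>j<n. pt (\<pi>1 (es!j) (Ra (sM (g (ps!j)) m))) q)"
proof -
  have g: "g = (\<Sum>j\<leftarrow>[0..<n]. fscale (g (ps!j)) (es!j))"
    by (rule ext, subst exp) (simp add: sum_list_fun_apply sum_fun_apply' fscale_def interv_sum_list_conv_sum_set_nat atLeast0LessThan)
  have "meq (LC R) (\<lambda>q. pt (\<pi>1 g (Ra m)) q) (\<lambda>q. \<Sum>j\<leftarrow>[0..<n]. pt (\<pi>1 (fscale (g (ps!j)) (es!j)) (Ra m)) q)"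
    by (subst g, rule slot_sum_list[OF s1])
  also have "meq (LC R) \<dots> (\<lambda>q. \<Sum>j\<leftarrow>[0..<n]. g (ps!j) * pt (\<pi>1 (es!j) (Ra m)) q)"
    by (rule meq_sum_list, rule meq_sym, rule slot_scale[OF s1])
  also have "meq (LC R) \<dots> (\<lambda>q. \<Sum>j\<leftarrow>[0..<n]. pt (\<pi>1 (es!j) (Ra (sM (g (ps!j)) m))) q)"
    by (rule meq_sum_list, unfold comp, rule slot_scale[OF s2])
  finally show ?thesis by (simp add: interv_sum_list_conv_sum_set_nat atLeast0LessThan)
qed

lemma NF:
  assumes s1: "slot (LC R) fscale \<pi>1" and s2: "slot (LC R) sM \<pi>2"
    and comp: "\<And>g m. \<pi>1 g (Ra m) = \<pi>2 m (Rb g)"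
    and exp: "\<And>x y. x \<in> set xs \<Longrightarrow> g x y = (\<Sum>j<n. g x (ps!j) * (es!j) y)"
    and vs: "vector_space sM"
  shows "meq (LC R) (\<lambda>q. \<Sum>x\<leftarrow>xs. pt (\<pi>1 (g x) (Ra (m x))) q)
     (\<lambda>q. \<Sum>j<n. pt (\<pi>1 (es!j) (Ra (\<Sum>x\<leftarrow>xs. sM (g x (ps!j)) (m x)))) q)"
proof -
  have "meq (LC R) (\<lambda>q. \<Sum>x\<leftarrow>xs. pt (\<pi>1 (g x) (Ra (m x))) q)
     (\<lambda>q. \<Sum>x\<leftarrow>xs. \<Sum>j<n. pt (\<pi>1 (es!j) (Ra (sM (g x (ps!j)) (m x)))) q)"
    by (rule meq_sum_list, rule GE[OF s1 s2 comp _ vs], rule exp)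
  also have "meq (LC R) \<dots> (\<lambda>q. \<Sum>j<n. \<Sum>x\<leftarrow>xs. pt (\<pi>2 (sM (g x (ps!j)) (m x)) (Rb (es!j))) q)"
    by (rule meq_ext) (simp add: sum_list_sum_swap comp)
  also have "meq (LC R) \<dots> (\<lambda>q. \<Sum>j<n. pt (\<pi>2 (\<Sum>x\<leftarrow>xs. sM (g x (ps!j)) (m x)) (Rb (es!j))) q)"
    by (rule meq_sum, rule meq_sym, rule slot_sum_list[OF s2])
  finally show ?thesis by (simp add: comp)
qed


lemma klin_zero: "k_lin_fun sV l \<Longrightarrow> l 0 = 0"
  unfolding k_lin_fun_def by (metis add_cancel_left_left add_0)

lemma klin_sum: "k_lin_fun sV l \<Longrightarrow> l (\<Sum>x\<in>A. f x) = (\<Sum>x\<in>A. l (f x))"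
  by (induction A rule: infinite_finite_induct) (auto simp: klin_zero, simp add: k_lin_fun_def)

lemma klin_sum_list: "k_lin_fun sV l \<Longrightarrow> l (\<Sum>x\<leftarrow>xs. f x) = (\<Sum>x\<leftarrow>xs. l (f x))"
  by (induction xs) (auto simp: klin_zero, simp add: k_lin_fun_def)

lemma sum_set_nth: "distinct xs \<Longrightarrow> (\<Sum>x\<in>set xs. f x) = (\<Sum>i<length xs. f (xs!i))"
  by (simp add: sum_list_distinct_conv_sum_set[symmetric] sum_list_sum_nth atLeast0LessThan)

lemma zipsum: "length as = length cs \<Longrightarrow> (\<Sum>(a,c)\<leftarrow>zip as cs. F a c) = (\<Sum>i<length as. (F (as!i) (cs!i) :: 'b::comm_monoid_add))"
  by (simp add: sum_list_sum_nth atLeast0LessThan case_prod_beta)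

lemma zipsum': "length as = length cs \<Longrightarrow> sum_list (map g (zip as cs)) = (\<Sum>i<length as. (g (as!i, cs!i) :: 'b::comm_monoid_add))"
  by (simp add: sum_list_sum_nth atLeast0LessThan)

lemma sum_list_minus': "(\<Sum>x\<leftarrow>xs. - f x) = - (\<Sum>x\<leftarrow>xs. (f x :: 'b::ab_group_add))"
  by (induction xs) auto

lemma sum_list_concat': "sum_list (concat xss) = sum_list (map sum_list (xss :: 'a::monoid_add list list))"
  by (induction xss) auto

lemma f3: "length as = length cs \<Longrightarrow> formal3 ([(1, (\<lambda>w. l (rm w a)), c, m). (l, m) \<leftarrow> xs, (a, c) \<leftarrow> zip as cs] @
             [(-1, l, c, act m a). (l, m) \<leftarrow> xs, (a, c) \<leftarrow> zip as cs]) =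
  (\<lambda>q. (\<Sum>(l,m)\<leftarrow>xs. \<Sum>i<length as. pt (\<lambda>w. l (rm w (as!i)), cs!i, m) q) -
       (\<Sum>(l,m)\<leftarrow>xs. \<Sum>i<length as. pt (l, cs!i, act m (as!i)) q))"
  unfolding formal3_def
  apply (rule ext)
  apply (simp add: sum_list_concat' map_concat comp_def case_prod_beta zipsum' sum_negf sum_list_minus' split_def)
  done

locale setting =
  fixes sA :: "'k::field \<Rightarrow> 'a::ring_1 \<Rightarrow> 'a"
    and sW :: "'k \<Rightarrow> 'w::ab_group_add \<Rightarrow> 'w"
    and lm :: "'a \<Rightarrow> 'w \<Rightarrow> 'w" and rm :: "'w \<Rightarrow> 'a \<Rightarrow> 'w" and d :: "'a \<Rightarrow> 'w"
    and sM :: "'k \<Rightarrow> 'm::ab_group_add \<Rightarrow> 'm" and act :: "'m \<Rightarrow> 'a \<Rightarrow> 'm"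
    and as :: "'a list" and cs :: "('a \<Rightarrow> 'k) list"
  assumes H1: "k_algebra sA"
    and H2: "basis_list sA as"
    and H3: "dual_basis sA as cs"
    and H4: "dga01 sA sW lm rm d"
    and H5: "\<exists>B. finite B \<and> module.span sW B = UNIV"
    and H6: "right_module sA sM act"
begin

lemma vsA: "vector_space sA" using H1 unfolding k_algebra_def by blast
lemma vsW: "vector_space sW" using H4 unfolding dga01_def by (elim conjE) simp
lemma vsM: "vector_space sM" using H6 unfolding right_module_def by (elim conjE) simp

sublocale A: vector_space sA by (rule vsA)
sublocale W: vector_space sW by (rule vsW)
sublocale M: vector_space sM by (rule vsM)

lemma lm_addl: "lm (a + b) w = lm a w + lm b w" using H4 unfolding dga01_def by (elim conjE) simp
lemma lm_addr: "lm a (w + w') = lm a w + lm a w'" using H4 unfolding dga01_def by (elim conjE) simp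
lemma lm_mult: "lm (a * b) w = lm a (lm b w)" using H4 unfolding dga01_def by (elim conjE) simp
lemma lm_one: "lm 1 w = w" using H4 unfolding dga01_def by (elim conjE) simp
lemma rm_addr: "rm w (a + b) = rm w a + rm w b" using H4 unfolding dga01_def by (elim conjE) simp
lemma rm_addl: "rm (w + w') a = rm w a + rm w' a" using H4 unfolding dga01_def by (elim conjE) simp
lemma rm_mult: "rm w (a * b) = rm (rm w a) b" using H4 unfolding dga01_def by (elim conjE) simp
lemma rm_one: "rm w 1 = w" using H4 unfolding dga01_def by (elim conjE) simp
lemma lm_rm: "lm a (rm w b) = rm (lm a w) b" using H4 unfolding dga01_def by (elim conjE) simp
lemma lm_sA: "lm (sA c a) w = sW c (lm a w)" using H4 unfolding dga01_def by (elim conjE) simp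
lemma lm_sW: "lm a (sW c w) = sW c (lm a w)" using H4 unfolding dga01_def by (elim conjE) simp
lemma rm_sA: "rm w (sA c a) = sW c (rm w a)" using H4 unfolding dga01_def by (elim conjE) simp
lemma rm_sW: "rm (sW c w) a = sW c (rm w a)" using H4 unfolding dga01_def by (elim conjE) simp
lemma d_add: "d (a + b) = d a + d b" using H4 unfolding dga01_def by (elim conjE) simp
lemma d_sA: "d (sA c a) = sW c (d a)" using H4 unfolding dga01_def by (elim conjE) simp

lemma act_addl: "act (m + m') a = act m a + act m' a" using H6 unfolding right_module_def by (elim conjE) simp
lemma act_addr: "act m (a + b) = act m a + act m b" using H6 unfolding right_module_def by (elim conjE) simp
lemma act_mult: "act m (a * b) = act (act m a) b" using H6 unfolding right_module_def by (elim conjE) simp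
lemma act_one: "act m 1 = m" using H6 unfolding right_module_def by (elim conjE) simp
lemma act_sM: "act (sM c m) a = sM c (act m a)" using H6 unfolding right_module_def by (elim conjE) simp
lemma act_sA: "act m (sA c a) = sM c (act m a)" using H6 unfolding right_module_def by (elim conjE) simp

lemma lenc: "length cs = length as" using H3 unfolding dual_basis_def by blast
lemma cs_lin: "i < length as \<Longrightarrow> k_lin_fun sA (cs!i)"
  using H3 lenc unfolding dual_basis_def by (metis nth_mem)
lemma cs_as: "i < length as \<Longrightarrow> j < length as \<Longrightarrow> (cs!i) (as!j) = (if i = j then 1 else 0)"
  using H3 unfolding dual_basis_def by blast

lemma exA: "a = (\<Sum>i<length as. sA ((cs!i) a) (as!i))"
proof -
  have dist: "distinct as" using H2 unfolding basis_list_def by blast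
  have "a \<in> A.span (set as)" using H2 unfolding basis_list_def by blast
  then obtain u where u: "a = (\<Sum>v\<in>set as. sA (u v) v)"
    using A.span_finite[of "set as"] by auto
  then have u': "a = (\<Sum>j<length as. sA (u (as!j)) (as!j))" using sum_set_nth[OF dist] by simp
  have "(cs!i) a = u (as!i)" if i: "i < length as" for i
  proof -
    have "(cs!i) a = (\<Sum>j<length as. (cs!i) (sA (u (as!j)) (as!j)))"
      by (subst u', rule klin_sum[OF cs_lin[OF i]])
    also have "\<dots> = (\<Sum>j<length as. u (as!j) * (if i = j then 1 else 0))"
      using cs_lin[OF i] cs_as[OF i] unfolding k_lin_fun_def by (intro sum.cong) auto
    also have "\<dots> = (\<Sum>j<length as. if i = j then u (as!j) else 0)"
      by (rule sum.cong) auto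
    also have "\<dots> = u (as!i)" using i by (simp add: sum.delta)
    finally show ?thesis .
  qed
  then show ?thesis by (subst u') (intro sum.cong, auto)
qed

end

context setting begin

lemma WB_ex: "\<exists>Bl. distinct Bl \<and> W.independent (set Bl) \<and> W.span (set Bl) = UNIV"
proof -
  obtain B0 where B0: "finite B0" "W.span B0 = UNIV" using H5 by blast
  obtain B where B: "B \<subseteq> B0" "W.independent B" "B0 \<subseteq> W.span B"
    using W.maximal_independent_subset[of B0] by blast
  have fin: "finite B" using B(1) B0(1) finite_subset by blast
  have "W.span B0 \<subseteq> W.span B" using B(3) W.span_minimal W.subspace_span by blast
  then have "W.span B = UNIV" using B0(2) by blast
  moreover obtain Bl where "set Bl = B" "distinct Bl" using finite_distinct_list[OF fin] by blast
  ultimately show ?thesis using B(2) by blast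
qed

definition WB where "WB = (SOME Bl. distinct Bl \<and> W.independent (set Bl) \<and> W.span (set Bl) = UNIV)"

lemma WB: "distinct WB" "W.independent (set WB)" "W.span (set WB) = UNIV"
  using someI_ex[OF WB_ex] unfolding WB_def by blast+

definition ee where "ee b w = W.representation (set WB) w b"

lemma ee_lin: "k_lin_fun sW (ee b)"
  unfolding k_lin_fun_def ee_def
  using W.representation_add[OF WB(2)] W.representation_scale[OF WB(2)] WB(3) by simp

lemma exW: "w = (\<Sum>j<length WB. sW (ee (WB!j) w) (WB!j))"
proof -
  have e: "(\<Sum>b\<in>set WB. sW (ee b w) b) = w"
    unfolding ee_def using W.sum_representation_eq[OF WB(2), of w "set WB"] WB(3) by simp
  show ?thesis using e sum_set_nth[OF WB(1), of "\<lambda>b. sW (ee b w) b"] by simp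
qed

lemma klin_add: "k_lin_fun sV l \<Longrightarrow> l (x + y) = l x + l y" unfolding k_lin_fun_def by blast
lemma klin_scale: "k_lin_fun sV l \<Longrightarrow> l (sV c x) = c * l x" unfolding k_lin_fun_def by blast

lemma expL: "k_lin_fun sW l \<Longrightarrow> l w = (\<Sum>j<length WB. l (WB!j) * (map ee WB ! j) w)"
  by (subst exW) (simp add: klin_sum klin_scale mult.commute)

lemma expC: "k_lin_fun sA g \<Longrightarrow> g x = (\<Sum>j<length as. g (as!j) * (cs ! j) x)"
  by (subst exA) (simp add: klin_sum klin_scale mult.commute)

end

lemma sum_list_cong': "(\<And>x. x \<in> set xs \<Longrightarrow> f x = g x) \<Longrightarrow> (\<Sum>x\<leftarrow>xs. f x) = (\<Sum>x\<leftarrow>xs. g x)"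
  by (induction xs) auto

context setting begin

lemma NF2L: assumes "\<And>x. x \<in> set xs \<Longrightarrow> k_lin_fun sW (g x)"
  shows "meq (LC (bil_rels fscale sM)) (\<lambda>q. \<Sum>x\<leftarrow>xs. pt (g x, m x) q)
    (\<lambda>q. \<Sum>j<length WB. pt (ee (WB!j), \<Sum>x\<leftarrow>xs. sM (g x (WB!j)) (m x)) q)"
  using NF[OF slot_bil1 slot_bil2, where Ra=id and Rb=id and g=g and m=m and xs=xs and n="length WB"
      and ps=WB and es="map ee WB", OF _ _ vsM] expL assms by simp

lemma NF2C: assumes "\<And>x. x \<in> set xs \<Longrightarrow> k_lin_fun sA (g x)"
  shows "meq (LC (bil_rels fscale sM)) (\<lambda>q. \<Sum>x\<leftarrow>xs. pt (g x, m x) q)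
    (\<lambda>q. \<Sum>j<length as. pt (cs!j, \<Sum>x\<leftarrow>xs. sM (g x (as!j)) (m x)) q)"
  using NF[OF slot_bil1 slot_bil2, where Ra=id and Rb=id and g=g and m=m and xs=xs and n="length as"
      and ps=as and es=cs, OF _ _ vsM] expC assms by simp

lemma NF3: assumes "\<And>x. x \<in> set xs \<Longrightarrow> k_lin_fun sW (g x)"
  shows "meq (LC (tril_rels fscale fscale sM)) (\<lambda>q. \<Sum>x\<leftarrow>xs. pt (g x, c, m x) q)
    (\<lambda>q. \<Sum>j<length WB. pt (ee (WB!j), c, \<Sum>x\<leftarrow>xs. sM (g x (WB!j)) (m x)) q)"
  using NF[OF slot_tril1 slot_tril3, where Ra="\<lambda>m. (c, m)" and Rb="\<lambda>u. (u, c)" and g=g and m=m and xs=xs and n="length WB"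
      and ps=WB and es="map ee WB", OF _ _ vsM] expL assms by simp

end

context setting begin

abbreviation "HA \<equiv> homA rm act"
abbreviation "Cot \<equiv> cotensor sW rm sM act as cs"
abbreviation "U \<equiv> Upsilon sM"
definition can where "can f = map (\<lambda>b. (ee b, f b)) WB"
definition lins where "lins xs \<longleftrightarrow> (\<forall>(l, m)\<in>set xs. k_lin_fun sW l)"

lemma HA_add: "f \<in> HA \<Longrightarrow> f (x + y) = f x + f y" unfolding homA_def by blast
lemma HA_rm: "f \<in> HA \<Longrightarrow> f (rm x a) = act (f x) a" unfolding homA_def by blast
lemma HA_zero: "f \<in> HA \<Longrightarrow> f 0 = 0" using HA_add[of f 0 0] by simp
lemma HA_scale: "f \<in> HA \<Longrightarrow> f (sW c x) = sM c (f x)"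
proof -
  assume f: "f \<in> HA"
  have "sW c x = rm x (sA c 1)" by (simp add: rm_sA rm_one)
  then show ?thesis using f by (simp add: HA_rm act_sA act_one)
qed
lemma HA_sum: "f \<in> HA \<Longrightarrow> f (\<Sum>i\<in>I. F i) = (\<Sum>i\<in>I. f (F i))"
  by (induction I rule: infinite_finite_induct) (auto simp: HA_zero HA_add)

lemma rm_zero: "rm w 0 = 0" using rm_addr[of w 0 0] by simp
lemma rm_sum: "rm w (\<Sum>i\<in>I. F i) = (\<Sum>i\<in>I. rm w (F i))"
  by (induction I rule: infinite_finite_induct) (auto simp: rm_zero rm_addr)
lemma act_zero: "act m 0 = 0" using act_addr[of m 0 0] by simp
lemma act_zerol: "act 0 a = 0" using act_addl[of 0 0 a] by simp
lemma act_sum: "act m (\<Sum>i\<in>I. F i) = (\<Sum>i\<in>I. act m (F i))"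
  by (induction I rule: infinite_finite_induct) (auto simp: act_zero act_addr)
lemma act_sum_list: "act (\<Sum>x\<leftarrow>xs. F x) a = (\<Sum>x\<leftarrow>xs. act (F x) a)"
  by (induction xs) (auto simp: act_zerol act_addl)
lemma act_neg: "act (- m) a = - act m a" using act_addl[of "-m" m a] act_zerol by (simp add: eq_neg_iff_add_eq_0)
lemma scale_sum_list: "sM c (\<Sum>x\<leftarrow>xs. F x) = (\<Sum>x\<leftarrow>xs. sM c (F x))"
  by (induction xs) (auto simp: M.scale_right_distrib)
lemma scale_sum_list_left: "sM (\<Sum>x\<leftarrow>xs. F x) m = (\<Sum>x\<leftarrow>xs. sM (F x) m)"
  by (induction xs) (auto simp: M.scale_left_distrib)

lemma U_can: assumes f: "f \<in> HA" shows "U (can f) = f"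
proof
  fix w
  have "U (can f) w = (\<Sum>j<length WB. sM (ee (WB!j) w) (f (WB!j)))"
    unfolding Upsilon_def can_def by (simp add: sum_list_sum_nth atLeast0LessThan)
  also have "\<dots> = f (\<Sum>j<length WB. sW (ee (WB!j) w) (WB!j))"
    using f by (simp add: HA_sum HA_scale)
  also have "\<dots> = f w" by (simp only: exW[of w, symmetric])
  finally show "U (can f) w = f w" .
qed

lemma can_lins: "lins (can f)" unfolding lins_def can_def using ee_lin by auto

lemma U_add: "lins xs \<Longrightarrow> U xs (x + y) = U xs x + U xs y"
  unfolding Upsilon_def lins_def
  by (induction xs) (auto simp: klin_add M.scale_left_distrib ac_simps)

lemma U_append: "U (xs @ ys) w = U xs w + U ys w" unfolding Upsilon_def by simp

end

context setting begin

lemma cot_lins: "xs \<in> Cot \<Longrightarrow> lins xs" unfolding cotensor_def lins_def by blast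

lemma cot_sum:
  "(\<Sum>(c, l, g, m)\<leftarrow>[(1, (\<lambda>w. l (rm w a)), c, m). (l, m) \<leftarrow> xs, (a, c) \<leftarrow> zip as cs] @
             [(-1, l, c, act m a). (l, m) \<leftarrow> xs, (a, c) \<leftarrow> zip as cs]. sM c (sM (l w * g a0) m)) =
   (\<Sum>(l,m)\<leftarrow>xs. \<Sum>i<length as. sM (l (rm w (as!i)) * (cs!i) a0) m) -
   (\<Sum>(l,m)\<leftarrow>xs. \<Sum>i<length as. sM (l w * (cs!i) a0) (act m (as!i)))"
  by (simp add: sum_list_concat' map_concat comp_def case_prod_beta zipsum' lenc sum_negf sum_list_minus' split_def)

lemma cot_HA: assumes xs: "xs \<in> Cot" shows "U xs \<in> HA"
proof -
  have L: "lins xs" by (rule cot_lins[OF xs])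
  have tz: "tensor3_zero fscale fscale sM ([(1, (\<lambda>w. l (rm w a)), c, m). (l, m) \<leftarrow> xs, (a, c) \<leftarrow> zip as cs] @
             [(-1, l, c, act m a). (l, m) \<leftarrow> xs, (a, c) \<leftarrow> zip as cs])"
    using xs unfolding cotensor_def by blast
  show ?thesis unfolding homA_def
  proof (intro CollectI conjI allI)
    fix x y show "U xs (x + y) = U xs x + U xs y" by (rule U_add[OF L])
  next
    fix w a
    have ea: "(\<Sum>i<length as. sA ((cs!i) a) (as!i)) = a" by (rule exA[symmetric])
    have 0: "(\<Sum>(l,m)\<leftarrow>xs. \<Sum>i<length as. sM (l (rm w (as!i)) * (cs!i) a) m) -
       (\<Sum>(l,m)\<leftarrow>xs. \<Sum>i<length as. sM (l w * (cs!i) a) (act m (as!i))) = 0"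
      using eval3[OF vsM tz, of w a] cot_sum by simp
    have 2: "U xs (rm w a) = (\<Sum>(l,m)\<leftarrow>xs. \<Sum>i<length as. sM (l (rm w (as!i)) * (cs!i) a) m)"
      unfolding Upsilon_def
    proof (rule sum_list_cong')
      fix x assume x: "x \<in> set xs"
      obtain l m where lm: "x = (l, m)" by fastforce
      have l: "k_lin_fun sW l" using L x lm unfolding lins_def by auto
      have "l (rm w a) = l (rm w (\<Sum>i<length as. sA ((cs!i) a) (as!i)))" by (simp only: ea)
      also have "\<dots> = (\<Sum>i<length as. l (rm w (as!i)) * (cs!i) a)"
        by (simp add: rm_sum rm_sA klin_sum[OF l] klin_scale[OF l] mult.commute)
      finally show "(case x of (l, m) \<Rightarrow> sM (l (rm w a)) m) =
          (case x of (l, m) \<Rightarrow> \<Sum>i<length as. sM (l (rm w (as!i)) * (cs!i) a) m)"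
        by (simp add: lm M.scale_sum_left)
    qed
    have 3: "act (U xs w) a = (\<Sum>(l,m)\<leftarrow>xs. \<Sum>i<length as. sM (l w * (cs!i) a) (act m (as!i)))"
      unfolding Upsilon_def act_sum_list
    proof (rule sum_list_cong')
      fix x assume x: "x \<in> set xs"
      obtain l m where lm: "x = (l, m)" by fastforce
      have "act m a = act m (\<Sum>i<length as. sA ((cs!i) a) (as!i))" by (simp only: ea)
      also have "\<dots> = (\<Sum>i<length as. sM ((cs!i) a) (act m (as!i)))"
        by (simp add: act_sum act_sA)
      finally show "act (case x of (l, m) \<Rightarrow> sM (l w) m) a =
          (case x of (l, m) \<Rightarrow> \<Sum>i<length as. sM (l w * (cs!i) a) (act m (as!i)))"
        by (simp add: lm act_sM M.scale_sum_right)
    qed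
    show "U xs (rm w a) = act (U xs w) a" using 0 2 3 by simp
  qed
qed

end

context setting begin

lemma lin_rm: "k_lin_fun sW l \<Longrightarrow> k_lin_fun sW (\<lambda>w. l (rm w a))"
  unfolding k_lin_fun_def by (simp add: rm_addl rm_sW)

lemma HA_cot: assumes L: "lins xs" and H: "U xs \<in> HA" shows "xs \<in> Cot"
proof -
  let ?Z = "LC (tril_rels fscale fscale sM :: (('w \<Rightarrow> 'k) \<times> ('a \<Rightarrow> 'k) \<times> 'm \<Rightarrow> 'k) set)"
  define N :: "('w \<Rightarrow> 'k) \<times> ('a \<Rightarrow> 'k) \<times> 'm \<Rightarrow> 'k" where "N = (\<lambda>q. \<Sum>i<length as. \<Sum>j<length WB. pt (ee (WB!j), cs!i, U xs (rm (WB!j) (as!i))) q)"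
  have Ll: "\<And>x. x \<in> set xs \<Longrightarrow> k_lin_fun sW (fst x)" using L unfolding lins_def by auto
  have A: "meq ?Z (\<lambda>q. \<Sum>(l,m)\<leftarrow>xs. \<Sum>i<length as. pt (\<lambda>w. l (rm w (as!i)), cs!i, m) q) N"
  proof -
    have "meq ?Z (\<lambda>q. \<Sum>(l,m)\<leftarrow>xs. \<Sum>i<length as. pt (\<lambda>w. l (rm w (as!i)), cs!i, m) q)
        (\<lambda>q. \<Sum>i<length as. \<Sum>x\<leftarrow>xs. pt ((\<lambda>w. fst x (rm w (as!i))), cs!i, snd x) q)"
      by (rule meq_ext) (simp add: sum_list_sum_swap split_def)
    also have "meq ?Z \<dots> (\<lambda>q. \<Sum>i<length as. \<Sum>j<length WB. pt (ee (WB!j), cs!i,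
          \<Sum>x\<leftarrow>xs. sM ((\<lambda>w. fst x (rm w (as!i))) (WB!j)) (snd x)) q)"
      by (rule meq_sum, rule NF3, rule lin_rm, rule Ll)
    also have "meq ?Z \<dots> N"
      unfolding N_def by (rule meq_ext) (simp add: Upsilon_def split_def)
    finally show ?thesis .
  qed
  have B: "meq ?Z (\<lambda>q. \<Sum>(l,m)\<leftarrow>xs. \<Sum>i<length as. pt (l, cs!i, act m (as!i)) q) N"
  proof -
    have "meq ?Z (\<lambda>q. \<Sum>(l,m)\<leftarrow>xs. \<Sum>i<length as. pt (l, cs!i, act m (as!i)) q)
        (\<lambda>q. \<Sum>i<length as. \<Sum>x\<leftarrow>xs. pt (fst x, cs!i, act (snd x) (as!i)) q)"
      by (rule meq_ext) (simp add: sum_list_sum_swap split_def)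
    also have "meq ?Z \<dots> (\<lambda>q. \<Sum>i<length as. \<Sum>j<length WB. pt (ee (WB!j), cs!i,
          \<Sum>x\<leftarrow>xs. sM (fst x (WB!j)) (act (snd x) (as!i))) q)"
      by (rule meq_sum, rule NF3, rule Ll)
    also have "meq ?Z \<dots> N"
      unfolding N_def 
    proof (rule meq_ext)
      fix q
      have "(\<Sum>x\<leftarrow>xs. sM (fst x (WB!j)) (act (snd x) (as!i))) = U xs (rm (WB!j) (as!i))" for i j
      proof -
        have "(\<Sum>x\<leftarrow>xs. sM (fst x (WB!j)) (act (snd x) (as!i))) = act (U xs (WB!j)) (as!i)"
          by (simp add: Upsilon_def act_sum_list act_sM split_def)
        also have "\<dots> = U xs (rm (WB!j) (as!i))" by (rule HA_rm[OF H, symmetric])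
        finally show ?thesis .
      qed
      then show "(\<Sum>i<length as. \<Sum>j<length WB. pt (ee (WB!j), cs!i,
          \<Sum>x\<leftarrow>xs. sM (fst x (WB!j)) (act (snd x) (as!i))) q) =
         (\<Sum>i<length as. \<Sum>j<length WB. pt (ee (WB!j), cs!i, U xs (rm (WB!j) (as!i))) q)" by simp
    qed
    finally show ?thesis .
  qed
  have "meq ?Z (\<lambda>q. \<Sum>(l,m)\<leftarrow>xs. \<Sum>i<length as. pt (\<lambda>w. l (rm w (as!i)), cs!i, m) q)
     (\<lambda>q. \<Sum>(l,m)\<leftarrow>xs. \<Sum>i<length as. pt (l, cs!i, act m (as!i)) q)"
    using A B by (blast intro: meq_trans meq_sym)
  then have "tensor3_zero fscale fscale sM ([(1, (\<lambda>w. l (rm w a)), c, m). (l, m) \<leftarrow> xs, (a, c) \<leftarrow> zip as cs] @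
             [(-1, l, c, act m a). (l, m) \<leftarrow> xs, (a, c) \<leftarrow> zip as cs])"
    unfolding tensor3_zero_def f3[OF lenc[symmetric]] meq_def .
  then show ?thesis using L unfolding cotensor_def lins_def by blast
qed

lemma cot_iff: "lins xs \<Longrightarrow> xs \<in> Cot \<longleftrightarrow> U xs \<in> HA"
  using cot_HA HA_cot by blast

end

definition PP :: "(('x \<Rightarrow> 'k::field) \<times> 'm) list \<Rightarrow> ('x \<Rightarrow> 'k) \<times> 'm \<Rightarrow> 'k" where
  "PP xs = (\<lambda>q. \<Sum>(l,m)\<leftarrow>xs. pt (l, m) q)"

lemma T2iff: "tensor2_zero sV sW ([(1, l, m). (l, m) \<leftarrow> xs] @ [(-1, l, m). (l, m) \<leftarrow> ys]) \<longleftrightarrow>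
   meq (LC (bil_rels sV sW)) (PP xs) (PP ys)"
proof -
  have "formal2 ([(1, l, m). (l, m) \<leftarrow> xs] @ [(-1, l, m). (l, m) \<leftarrow> ys]) = (\<lambda>q. PP xs q - PP ys q)"
    unfolding formal2_def PP_def by (simp add: case_prod_beta split_def sum_list_minus' comp_def)
  then show ?thesis unfolding tensor2_zero_def meq_def by simp
qed

definition sc where "sc sM c xs = map (\<lambda>(l, m). (l, sM c m)) xs"
definition xa where "xa lm xs a = map (\<lambda>(l, m). (\<lambda>w. l (lm a w), m)) xs"

context setting begin

lemma NF_L: assumes "lins xs"
  shows "meq (LC (bil_rels fscale sM)) (PP xs) (\<lambda>q. \<Sum>j<length WB. pt (ee (WB!j), U xs (WB!j)) q)"
proof -
  have "meq (LC (bil_rels fscale sM)) (\<lambda>q. \<Sum>x\<leftarrow>xs. pt (fst x, snd x) q)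
    (\<lambda>q. \<Sum>j<length WB. pt (ee (WB!j), \<Sum>x\<leftarrow>xs. sM (fst x (WB!j)) (snd x)) q)"
    by (rule NF2L) (use assms in \<open>auto simp: lins_def\<close>)
  then show ?thesis unfolding PP_def Upsilon_def by (simp add: split_def)
qed

lemma Uwd: "lins xs \<Longrightarrow> lins ys \<Longrightarrow> U xs = U ys \<Longrightarrow> meq (LC (bil_rels fscale sM)) (PP xs) (PP ys)"
proof -
  assume a: "lins xs" "lins ys" "U xs = U ys"
  have 1: "meq (LC (bil_rels fscale sM)) (PP xs) (\<lambda>q. \<Sum>j<length WB. pt (ee (WB!j), U ys (WB!j)) q)"
    using NF_L[OF a(1)] a(3) by simp
  show ?thesis by (rule meq_trans[OF 1 meq_sym[OF NF_L[OF a(2)]]])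
qed

lemma Uinv: assumes "meq (LC (bil_rels fscale sM)) (PP xs) (PP ys)" shows "U xs = U ys"
proof
  fix w
  have tz: "tensor2_zero fscale sM ([(1, l, m). (l, m) \<leftarrow> xs] @ [(-1, l, m). (l, m) \<leftarrow> ys])"
    using assms T2iff by blast
  have "(\<Sum>(c, g, m)\<leftarrow>[(1, l, m). (l, m) \<leftarrow> xs] @ [(-1, l, m). (l, m) \<leftarrow> ys]. sM c (sM (g w) m)) = 0"
    by (rule eval2[OF vsM tz])
  then have "U xs w - U ys w = 0"
    unfolding Upsilon_def by (simp add: case_prod_beta split_def sum_list_minus' comp_def)
  then show "U xs w = U ys w" by simp
qed

lemma HA_plus: "f \<in> HA \<Longrightarrow> g \<in> HA \<Longrightarrow> (\<lambda>w. f w + g w) \<in> HA"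
  unfolding homA_def by (auto simp: act_addl ac_simps)
lemma HA_smult: "f \<in> HA \<Longrightarrow> (\<lambda>w. sM c (f w)) \<in> HA"
  unfolding homA_def by (auto simp: act_sM M.scale_right_distrib)
lemma HA_lm: "f \<in> HA \<Longrightarrow> (\<lambda>w. f (lm a w)) \<in> HA"
  unfolding homA_def by (auto simp: lm_addr lm_rm)
lemma HA_0: "(\<lambda>w. 0) \<in> HA"
  unfolding homA_def by (auto simp: act_zerol)

lemma lins_append: "lins xs \<Longrightarrow> lins ys \<Longrightarrow> lins (xs @ ys)" unfolding lins_def by auto
lemma U_append': "U (xs @ ys) = (\<lambda>w. U xs w + U ys w)" by (rule ext, rule U_append)

lemma Cot_append: "xs \<in> Cot \<Longrightarrow> ys \<in> Cot \<Longrightarrow> xs @ ys \<in> Cot"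
proof -
  assume xs: "xs \<in> Cot" and ys: "ys \<in> Cot"
  have L: "lins (xs @ ys)" by (rule lins_append[OF cot_lins[OF xs] cot_lins[OF ys]])
  have "U (xs @ ys) \<in> HA" unfolding U_append' by (rule HA_plus[OF cot_HA[OF xs] cot_HA[OF ys]])
  then show ?thesis using cot_iff[OF L] by blast
qed

lemma Cot_nil: "[] \<in> Cot"
proof -
  have e: "U [] = (\<lambda>w. 0)" unfolding Upsilon_def by simp
  have "U [] \<in> HA" unfolding e by (rule HA_0)
  then show ?thesis using cot_iff[of "[]"] by (simp add: lins_def)
qed

lemma U_sc: "U (sc sM c xs) = (\<lambda>w. sM c (U xs w))"
  unfolding Upsilon_def sc_def by (rule ext) (simp add: scale_sum_list split_def comp_def mult.commute)

lemma Cot_sc: "xs \<in> Cot \<Longrightarrow> sc sM c xs \<in> Cot"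
proof -
  assume xs: "xs \<in> Cot"
  have L: "lins (sc sM c xs)" using cot_lins[OF xs] unfolding lins_def sc_def by auto
  have "U (sc sM c xs) \<in> HA" unfolding U_sc by (rule HA_smult[OF cot_HA[OF xs]])
  then show ?thesis using cot_iff[OF L] by blast
qed

lemma U_xa: "U (xa lm xs a) = (\<lambda>w. U xs (lm a w))"
  unfolding Upsilon_def xa_def by (rule ext) (simp add: split_def comp_def)

lemma lin_lm: "k_lin_fun sW l \<Longrightarrow> k_lin_fun sW (\<lambda>w. l (lm a w))"
  unfolding k_lin_fun_def by (simp add: lm_addr lm_sW)

lemma Cot_xa: "xs \<in> Cot \<Longrightarrow> xa lm xs a \<in> Cot"
proof -
  assume xs: "xs \<in> Cot"
  have L: "lins (xa lm xs a)" using cot_lins[OF xs] lin_lm unfolding lins_def xa_def by auto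
  have "U (xa lm xs a) \<in> HA" unfolding U_xa by (rule HA_lm[OF cot_HA[OF xs]])
  then show ?thesis using cot_iff[OF L] by blast
qed

lemma Cot_can: "f \<in> HA \<Longrightarrow> can f \<in> Cot"
  using cot_iff[OF can_lins] U_can by simp

end

context setting begin

lemma F2C: "formal2 ([(1, c, act (N xs) a). (a, c) \<leftarrow> zip as cs] @
               [(-1, c, N (map (\<lambda>(l, m). (\<lambda>w. l (lm a w), m)) xs)). (a, c) \<leftarrow> zip as cs] @
               [(-1, (\<lambda>x. l (d x)), m). (l, m) \<leftarrow> xs]) =
   (\<lambda>q. (\<Sum>i<length as. pt (cs!i, act (N xs) (as!i)) q) - (\<Sum>i<length as. pt (cs!i, N (xa lm xs (as!i))) q)
      - PP (map (\<lambda>(l, m). (\<lambda>x. l (d x), m)) xs) q)"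
  unfolding formal2_def PP_def xa_def
  by (rule ext) (simp add: sum_list_concat' map_concat comp_def case_prod_beta zipsum' lenc sum_negf sum_list_minus' split_def)

lemma lin_d: "k_lin_fun sW l \<Longrightarrow> k_lin_fun sA (\<lambda>x. l (d x))"
  unfolding k_lin_fun_def by (simp add: d_add d_sA)

lemma conn_cond:
  assumes xs: "xs \<in> Cot"
    and Y: "\<And>i. i < length as \<Longrightarrow> Y i = act X (as!i) - U xs (d (as!i))"
  shows "meq (LC (bil_rels fscale sM))
     (\<lambda>q. \<Sum>i<length as. pt (cs!i, act X (as!i)) q)
     (\<lambda>q. (\<Sum>i<length as. pt (cs!i, Y i) q) + PP (map (\<lambda>(l, m). (\<lambda>x. l (d x), m)) xs) q)"
proof -
  let ?Z = "LC (bil_rels fscale sM :: (('a \<Rightarrow> 'k) \<times> 'm \<Rightarrow> 'k) set)"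
  have L: "lins xs" by (rule cot_lins[OF xs])
  have D: "meq ?Z (PP (map (\<lambda>(l, m). (\<lambda>x. l (d x), m)) xs))
      (\<lambda>q. \<Sum>j<length as. pt (cs!j, U xs (d (as!j))) q)"
  proof -
    have "meq ?Z (\<lambda>q. \<Sum>x\<leftarrow>xs. pt ((\<lambda>y. fst x (d y)), snd x) q)
      (\<lambda>q. \<Sum>j<length as. pt (cs!j, \<Sum>x\<leftarrow>xs. sM ((\<lambda>y. fst x (d y)) (as!j)) (snd x)) q)"
      by (rule NF2C, rule lin_d) (use L in \<open>auto simp: lins_def\<close>)
    then show ?thesis unfolding PP_def Upsilon_def by (simp add: split_def comp_def)
  qed
  have "meq ?Z (\<lambda>q. \<Sum>i<length as. pt (cs!i, act X (as!i)) q)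
     (\<lambda>q. \<Sum>i<length as. pt (cs!i, Y i + U xs (d (as!i))) q)"
    by (rule meq_ext) (simp add: Y)
  also have "meq ?Z \<dots> (\<lambda>q. \<Sum>i<length as. (pt (cs!i, Y i) q + pt (cs!i, U xs (d (as!i))) q))"
    by (rule meq_sum, rule slot_add[OF slot_bil2])
  also have "meq ?Z \<dots> (\<lambda>q. (\<Sum>i<length as. pt (cs!i, Y i) q) + (\<Sum>j<length as. pt (cs!j, U xs (d (as!j))) q))"
    by (rule meq_ext) (simp add: sum.distrib)
  also have "meq ?Z \<dots> (\<lambda>q. (\<Sum>i<length as. pt (cs!i, Y i) q) + PP (map (\<lambda>(l, m). (\<lambda>x. l (d x), m)) xs) q)"
    by (rule meq_add[OF meq_refl meq_sym[OF D]])
  finally show ?thesis .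
qed

end

context setting begin

abbreviation "HC \<equiv> hom_connections lm rm d sM act"
abbreviation "CC \<equiv> comodule_connections lm rm d sW sM act as cs"
abbreviation "H2C \<equiv> hom_to_conn sW rm sM act as cs"

lemma H2C_Cot: "xs \<in> Cot \<Longrightarrow> H2C N0 xs = - N0 (U xs)" unfolding hom_to_conn_def by simp

lemma part2: assumes N0: "N0 \<in> HC" shows "H2C N0 \<in> CC"
proof -
  have hc_add: "\<And>f g. f \<in> HA \<Longrightarrow> g \<in> HA \<Longrightarrow> N0 (\<lambda>w. f w + g w) = N0 f + N0 g"
    and hc_scale: "\<And>c f. f \<in> HA \<Longrightarrow> N0 (\<lambda>w. sM c (f w)) = sM c (N0 f)"
    and hc_conn: "\<And>f a. f \<in> HA \<Longrightarrow> N0 (\<lambda>w. f (lm a w)) = act (N0 f) a + f (d a)"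
    using N0 unfolding hom_connections_def by blast+
  let ?N = "H2C N0"
  show ?thesis unfolding comodule_connections_def
  proof (intro CollectI conjI ballI allI impI)
    fix xs ys assume xs: "xs \<in> Cot" and ys: "ys \<in> Cot"
      and tz: "tensor2_zero fscale sM ([(1, l, m). (l, m) \<leftarrow> xs] @ [(-1, l, m). (l, m) \<leftarrow> ys])"
    have "U xs = U ys" using tz T2iff Uinv by blast
    then show "?N xs = ?N ys" using xs ys by (simp add: H2C_Cot)
  next
    fix xs ys assume xs: "xs \<in> Cot" and ys: "ys \<in> Cot"
    show "?N (xs @ ys) = ?N xs + ?N ys"
      using Cot_append[OF xs ys] xs ys
      by (simp add: H2C_Cot U_append' hc_add[OF cot_HA[OF xs] cot_HA[OF ys]])
  next
    fix c xs assume xs: "xs \<in> Cot"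
    have e: "map (\<lambda>(l, m). (l, sM c m)) xs = sc sM c xs" unfolding sc_def ..
    show "?N (map (\<lambda>(l, m). (l, sM c m)) xs) = sM c (?N xs)"
      unfolding e using Cot_sc[OF xs] xs
      by (simp add: H2C_Cot U_sc hc_scale[OF cot_HA[OF xs]])
  next
    fix xs assume xs: "xs \<in> Cot"
    have Y: "?N (xa lm xs (as!i)) = act (?N xs) (as!i) - U xs (d (as!i))" for i
    proof -
      have "?N (xa lm xs (as!i)) = - N0 (\<lambda>w. U xs (lm (as!i) w))"
        using Cot_xa[OF xs] by (simp add: H2C_Cot U_xa)
      also have "\<dots> = - (act (N0 (U xs)) (as!i) + U xs (d (as!i)))"
        by (simp add: hc_conn[OF cot_HA[OF xs]])
      also have "\<dots> = act (?N xs) (as!i) - U xs (d (as!i))"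
        using xs by (simp add: H2C_Cot act_neg)
      finally show ?thesis .
    qed
    have m: "meq (LC (bil_rels fscale sM))
     (\<lambda>q. \<Sum>i<length as. pt (cs!i, act (?N xs) (as!i)) q)
     (\<lambda>q. (\<Sum>i<length as. pt (cs!i, ?N (xa lm xs (as!i))) q) + PP (map (\<lambda>(l, m). (\<lambda>x. l (d x), m)) xs) q)"
      by (rule conn_cond[OF xs Y])
    show "tensor2_zero fscale sM
              ([(1, c, act (?N xs) a). (a, c) \<leftarrow> zip as cs] @
               [(-1, c, ?N (map (\<lambda>(l, m). (\<lambda>w. l (lm a w), m)) xs)). (a, c) \<leftarrow> zip as cs] @
               [(-1, (\<lambda>x. l (d x)), m). (l, m) \<leftarrow> xs])"
      unfolding tensor2_zero_def F2C using m unfolding meq_def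
      by (rule lc_ext) (simp add: algebra_simps)
  next
    fix xs assume "xs \<notin> Cot" then show "?N xs = 0" unfolding hom_to_conn_def by simp
  qed
qed

lemma part1: assumes "N0 \<in> HC" "N0' \<in> HC" "H2C N0 = H2C N0'" shows "N0 = N0'"
proof
  fix f
  show "N0 f = N0' f"
  proof (cases "f \<in> HA")
    case True
    have "H2C N0 (can f) = H2C N0' (can f)" using assms(3) by simp
    then show ?thesis using Cot_can[OF True] by (simp add: H2C_Cot U_can[OF True])
  next
    case False then show ?thesis using assms(1,2) unfolding hom_connections_def by auto
  qed
qed

end

context setting begin

lemma E2C: "(\<Sum>(c, g, m)\<leftarrow>[(1, c, act (N xs) a). (a, c) \<leftarrow> zip as cs] @
               [(-1, c, N (map (\<lambda>(l, m). (\<lambda>w. l (lm a w), m)) xs)). (a, c) \<leftarrow> zip as cs] @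
               [(-1, (\<lambda>x. l (d x)), m). (l, m) \<leftarrow> xs]. sM c (sM (g x0) m)) =
   (\<Sum>i<length as. sM ((cs!i) x0) (act (N xs) (as!i))) - (\<Sum>i<length as. sM ((cs!i) x0) (N (xa lm xs (as!i))))
      - (\<Sum>(l, m)\<leftarrow>xs. sM (l (d x0)) m)"
  unfolding xa_def
  by (simp add: sum_list_concat' map_concat comp_def case_prod_beta zipsum' lenc sum_negf sum_list_minus' split_def)

lemma lm_zero: "lm 0 w = 0" using lm_addl[of 0 0 w] by simp
lemma lm_sum: "lm (\<Sum>i\<in>I. F i) w = (\<Sum>i\<in>I. lm (F i) w)"
  by (induction I rule: infinite_finite_induct) (auto simp: lm_zero lm_addl)

lemma U_concat: "U (concat (map F [0..<k])) w = (\<Sum>i<k. U (F i) w)"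
  by (induction k) (auto simp: U_append Upsilon_def)

lemma part3: assumes N: "N \<in> CC" shows "\<exists>N0\<in>HC. N = H2C N0"
proof -
  have cc_wd: "\<And>xs ys. xs \<in> Cot \<Longrightarrow> ys \<in> Cot \<Longrightarrow>
      tensor2_zero fscale sM ([(1, l, m). (l, m) \<leftarrow> xs] @ [(-1, l, m). (l, m) \<leftarrow> ys]) \<Longrightarrow> N xs = N ys"
    and cc_add: "\<And>xs ys. xs \<in> Cot \<Longrightarrow> ys \<in> Cot \<Longrightarrow> N (xs @ ys) = N xs + N ys"
    and cc_scale: "\<And>c xs. xs \<in> Cot \<Longrightarrow> N (map (\<lambda>(l, m). (l, sM c m)) xs) = sM c (N xs)"
    and cc_conn: "\<And>xs. xs \<in> Cot \<Longrightarrow> tensor2_zero fscale sM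
              ([(1, c, act (N xs) a). (a, c) \<leftarrow> zip as cs] @
               [(-1, c, N (map (\<lambda>(l, m). (\<lambda>w. l (lm a w), m)) xs)). (a, c) \<leftarrow> zip as cs] @
               [(-1, (\<lambda>x. l (d x)), m). (l, m) \<leftarrow> xs])"
    and cc_out: "\<And>xs. xs \<notin> Cot \<Longrightarrow> N xs = 0"
    using N unfolding comodule_connections_def by blast+
  have cc_sc: "\<And>c xs. xs \<in> Cot \<Longrightarrow> N (sc sM c xs) = sM c (N xs)"
    unfolding sc_def by (rule cc_scale)
  have N_eqU: "\<And>xs ys. xs \<in> Cot \<Longrightarrow> ys \<in> Cot \<Longrightarrow> U xs = U ys \<Longrightarrow> N xs = N ys"
    using cc_wd T2iff Uwd cot_lins by blast
  have N_nil: "N [] = 0" using cc_add[OF Cot_nil Cot_nil] by simp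
  have N_concat: "(\<And>i. i < k \<Longrightarrow> F i \<in> Cot) \<Longrightarrow> concat (map F [0..<k]) \<in> Cot \<and>
      N (concat (map F [0..<k])) = (\<Sum>i<k. N (F i))" for F k
  proof (induction k)
    case 0 then show ?case using Cot_nil N_nil by simp
  next
    case (Suc k)
    then have IH: "concat (map F [0..<k]) \<in> Cot" "N (concat (map F [0..<k])) = (\<Sum>i<k. N (F i))"
      and Fk: "F k \<in> Cot" by auto
    show ?case using Cot_append[OF IH(1) Fk] cc_add[OF IH(1) Fk] IH(2) by simp
  qed
  define N0 where "N0 f = (if f \<in> HA then - N (can f) else 0)" for f
  have N_can: "\<And>f. f \<in> HA \<Longrightarrow> N0 f = - N (can f)" unfolding N0_def by simp
  have eq: "N = H2C N0"
  proof
    fix xs show "N xs = H2C N0 xs"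
    proof (cases "xs \<in> Cot")
      case True
      have "N (can (U xs)) = N xs"
        by (rule N_eqU[OF Cot_can[OF cot_HA[OF True]] True]) (simp add: U_can[OF cot_HA[OF True]])
      then show ?thesis using True by (simp add: H2C_Cot N_can[OF cot_HA[OF True]])
    next
      case False then show ?thesis by (simp add: cc_out hom_to_conn_def)
    qed
  qed
  have "N0 \<in> HC" unfolding hom_connections_def
  proof (intro CollectI conjI ballI allI impI)
    fix f g assume f: "f \<in> HA" and g: "g \<in> HA"
    have c: "can f @ can g \<in> Cot" by (rule Cot_append[OF Cot_can[OF f] Cot_can[OF g]])
    have "N (can (\<lambda>w. f w + g w)) = N (can f @ can g)"
      by (rule N_eqU[OF Cot_can[OF HA_plus[OF f g]] c]) (simp add: U_can f g HA_plus U_append')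
    then show "N0 (\<lambda>w. f w + g w) = N0 f + N0 g"
      by (simp add: N_can f g HA_plus cc_add[OF Cot_can[OF f] Cot_can[OF g]])
  next
    fix c f assume f: "f \<in> HA"
    have "N (can (\<lambda>w. sM c (f w))) = N (sc sM c (can f))"
      by (rule N_eqU[OF Cot_can[OF HA_smult[OF f]] Cot_sc[OF Cot_can[OF f]]]) (simp add: U_can f HA_smult U_sc)
    then show "N0 (\<lambda>w. sM c (f w)) = sM c (N0 f)"
      by (simp add: N_can f HA_smult cc_sc[OF Cot_can[OF f]])
  next
    fix f a assume f: "f \<in> HA"
    define xs where "xs = can f"
    have xs: "xs \<in> Cot" unfolding xs_def by (rule Cot_can[OF f])
    have Uxs: "U xs = f" unfolding xs_def by (rule U_can[OF f])
    have 1: "N0 (\<lambda>w. f (lm a w)) = - N (xa lm xs a)"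
    proof -
      have "N (can (\<lambda>w. f (lm a w))) = N (xa lm xs a)"
        by (rule N_eqU[OF Cot_can[OF HA_lm[OF f]] Cot_xa[OF xs]]) (simp add: U_can f HA_lm U_xa Uxs)
      then show ?thesis by (simp add: N_can HA_lm f)
    qed
    have 2: "N0 f = - N xs" unfolding xs_def by (rule N_can[OF f])
    have ea: "(\<Sum>i<length as. sA ((cs!i) a) (as!i)) = a" by (rule exA[symmetric])
    have ev: "(\<Sum>i<length as. sM ((cs!i) a) (act (N xs) (as!i))) - (\<Sum>i<length as. sM ((cs!i) a) (N (xa lm xs (as!i))))
      - (\<Sum>(l, m)\<leftarrow>xs. sM (l (d a)) m) = 0"
      using eval2[OF vsM cc_conn[OF xs], of a] E2C by simp
    have t1: "(\<Sum>i<length as. sM ((cs!i) a) (act (N xs) (as!i))) = act (N xs) a"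
    proof -
      have "act (N xs) a = act (N xs) (\<Sum>i<length as. sA ((cs!i) a) (as!i))" by (simp only: ea)
      also have "\<dots> = (\<Sum>i<length as. sM ((cs!i) a) (act (N xs) (as!i)))" by (simp add: act_sum act_sA)
      finally show ?thesis by simp
    qed
    have t3': "(\<Sum>(l, m)\<leftarrow>xs. sM (l (d a)) m) = U xs (d a)"
      unfolding Upsilon_def by (simp add: split_def)
    have t3: "(\<Sum>(l, m)\<leftarrow>xs. sM (l (d a)) m) = f (d a)" using t3' Uxs by simp
    have t2: "(\<Sum>i<length as. sM ((cs!i) a) (N (xa lm xs (as!i)))) = N (xa lm xs a)"
    proof -
      define F where "F i = sc sM ((cs!i) a) (xa lm xs (as!i))" for i
      have FC: "\<And>i. F i \<in> Cot" unfolding F_def by (rule Cot_sc[OF Cot_xa[OF xs]])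
      have "(\<Sum>i<length as. sM ((cs!i) a) (N (xa lm xs (as!i)))) = (\<Sum>i<length as. N (F i))"
        unfolding F_def by (simp add: cc_sc[OF Cot_xa[OF xs]])
      also have "\<dots> = N (concat (map F [0..<length as]))" using N_concat[of "length as" F] FC by simp
      also have "\<dots> = N (xa lm xs a)"
      proof (rule N_eqU)
        show "concat (map F [0..<length as]) \<in> Cot" using N_concat[of "length as" F] FC by simp
        show "xa lm xs a \<in> Cot" by (rule Cot_xa[OF xs])
        show "U (concat (map F [0..<length as])) = U (xa lm xs a)"
        proof
          fix w
          have "U (concat (map F [0..<length as])) w = (\<Sum>i<length as. sM ((cs!i) a) (f (lm (as!i) w)))"
            by (simp add: U_concat F_def U_sc U_xa Uxs)
          also have "\<dots> = f (\<Sum>i<length as. sW ((cs!i) a) (lm (as!i) w))"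
            by (simp add: HA_sum[OF f] HA_scale[OF f])
          also have "\<dots> = f (lm (\<Sum>i<length as. sA ((cs!i) a) (as!i)) w)"
            by (simp add: lm_sum lm_sA)
          also have "\<dots> = f (lm a w)" by (simp only: ea)
          finally show "U (concat (map F [0..<length as])) w = U (xa lm xs a) w"
            by (simp add: U_xa Uxs)
        qed
      qed
      finally show ?thesis .
    qed
    have "N (xa lm xs a) = act (N xs) a - f (d a)" using ev t1 t2 t3 by (simp add: algebra_simps)
    then show "N0 (\<lambda>w. f (lm a w)) = act (N0 f) a + f (d a)"
      using 1 2 by (simp add: act_neg)
  next
    fix f assume "f \<notin> HA" then show "N0 f = 0" unfolding N0_def by simp
  qed
  then show ?thesis using eq by blast
qed

end

context setting begin

lemma main: "bij_betw H2C HC CC"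
  unfolding bij_betw_def
proof (intro conjI)
  show "inj_on H2C HC" by (rule inj_onI) (rule part1)
  show "H2C ` HC = CC"
  proof
    show "H2C ` HC \<subseteq> CC" using part2 by blast
    show "CC \<subseteq> H2C ` HC" using part3 by blast
  qed
qed

end

theorem mainTheorem1:
  fixes sA :: "'k::field \<Rightarrow> 'a::ring_1 \<Rightarrow> 'a"
    and sW :: "'k \<Rightarrow> 'w::ab_group_add \<Rightarrow> 'w"
    and lm :: "'a \<Rightarrow> 'w \<Rightarrow> 'w" and rm :: "'w \<Rightarrow> 'a \<Rightarrow> 'w" and d :: "'a \<Rightarrow> 'w"
    and sM :: "'k \<Rightarrow> 'm::ab_group_add \<Rightarrow> 'm" and act :: "'m \<Rightarrow> 'a \<Rightarrow> 'm"
    and as :: "'a list" and cs :: "('a \<Rightarrow> 'k) list"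
  assumes "k_algebra sA"
    and "basis_list sA as"
    and "dual_basis sA as cs"
    and "dga01 sA sW lm rm d"
    and "\<exists>B. finite B \<and> module.span sW B = UNIV"
    and "right_module sA sM act"
  shows "bij_betw (hom_to_conn sW rm sM act as cs)
           (hom_connections lm rm d sM act)
           (comodule_connections lm rm d sW sM act as cs)"
proof -
  interpret setting sA sW lm rm d sM act as cs
    by (rule setting.intro) (rule assms)+
  show ?thesis by (rule main)
qed

end
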